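(* Assume $d'=1$, $t>1$, fix $j\in[t]$ and $n\in[t]\setminus\{j\}$, and let $2\le r\le\min(a,d)$. Fix ordered tuples $K=(k_1,\dots,k_r)$ and $L=(l_1,\dots,l_r)$ of distinct elements of $[d]$. For every $\alpha\in\mathbb N^r$ with $\sum_m\alpha_m=r$ there exists a map $f:[r]\to[r]$ with $|f^{-1}(m)|=\alpha_m$ for all $m$ such that every directed cycle of $f$ is a fixed point. For any such $f$, define the $r\times r$ matrix $M_\alpha(y)$ by \[ (M_\alpha)_{p,q}=\omega(k_{f(p)},k_p)\,y_{n,j}(\{k_{f(p)},k_p\},l_q),\qquad p,q\in[r], \] and $D_{\alpha,L}(y)=\det M_\alpha(y)$. Then for all $W$, \[ D_{\alpha,L}(\mu(W))=\Big(\prod_{m=1}^r v_{k_m}^{\alpha_m}\Big)\det(A_{K,L}), \] where $A_{K,L}$ is the submatrix of $A$ with rows $K$ and columns $L$. Consequently, for each $1\le k<r$, all $2\times2$ minors of the catalecticant matrix with rows indexed by multi-indices $\beta\in\mathbb N^r$ of degree $k$, columns indexed by multi-indices $\gamma\in\mathbb N^r$ of degree $r-k$, and entries $D_{\beta+\gamma,L}(y)$, are homogeneous polynomials of degree $2r$ vanishing on the attention variety.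
   Context: Setup: $Q,K\in\mathbb R^{a\times d}$, $V\in\mathbb R^{1\times d}$ with row $v=(v_1,\dots,v_d)$, $A=K^\top Q$, $\varphi_W(X)=VX(X^\top AX)$ for $X=(x_{kn})\in\mathbb R^{d\times t}$. For a size-2 multiset $\mathcal A$ on $[d]$, $b\in[d]$, $n\ne j$: $c_{n,j}(\mathcal A,b)$ is the coefficient of $(\prod_{u\in\mathcal A}x_{un})x_{bj}$ in $\varphi_W(X)[1,j]$ and $y_{n,j}(\mathcal A,b)=c_{n,j}(\mathcal A,b)/|\operatorname{Perm}(\mathcal A)|$, where $\operatorname{Perm}$ is the set of distinct orderings. $\omega(u,w)=1$ if $u=w$ and $2$ if $u\ne w$. $\mu$ maps $W=(Q,K,V)$ to all scaled coefficients (ambient coordinates with the same names); the attention variety is the Zariski closure of $\operatorname{im}\mu$. *)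

theory Defs
  imports "HOL-Library.Poly_Mapping" "HOL-Library.Multiset"
    "HOL-Combinatorics.Multiset_Permutations"
    "Jordan_Normal_Form.Determinant"
begin

(* Indices are 0-based: [d] = {0..<d}, [t] = {0..<t}, [r] = {0..<r}.
   Real matrices are functions nat => nat => real, with only the entries
   in the stated ranges being relevant. *)

type_synonym xmono = "(nat \<times> nat) \<Rightarrow>\<^sub>0 nat"
type_synonym xpoly = "xmono \<Rightarrow>\<^sub>0 real"

definition xvar :: "nat \<Rightarrow> nat \<Rightarrow> xpoly" where
  "xvar k n = Poly_Mapping.single (Poly_Mapping.single (k, n) 1) 1"

definition xconst :: "real \<Rightarrow> xpoly" where
  "xconst c = Poly_Mapping.single 0 c"

definition attnA :: "nat \<Rightarrow> (nat \<Rightarrow> nat \<Rightarrow> real) \<Rightarrow> (nat \<Rightarrow> nat \<Rightarrow> real) \<Rightarrow> nat \<Rightarrow> nat \<Rightarrow> real" where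
  "attnA a Qm Km u w = (\<Sum>i<a. Km i u * Qm i w)"

text \<open>phi_W(X)[1,j] = sum_n (V X)_{1n} (X^T A X)_{nj}, as a polynomial in the x_{kn},
  for X of size d x t and V a 1 x d row vector v.\<close>
definition phi :: "nat \<Rightarrow> nat \<Rightarrow> nat \<Rightarrow> (nat \<Rightarrow> nat \<Rightarrow> real) \<Rightarrow> (nat \<Rightarrow> nat \<Rightarrow> real)
    \<Rightarrow> (nat \<Rightarrow> real) \<Rightarrow> nat \<Rightarrow> xpoly" where
  "phi a d t Qm Km v j =
     (\<Sum>n<t. (\<Sum>k<d. xconst (v k) * xvar k n) *
        (\<Sum>u<d. \<Sum>w<d. xvar u n * xconst (attnA a Qm Km u w) * xvar w j))"

definition coeff_mono :: "nat \<Rightarrow> nat \<Rightarrow> nat multiset \<Rightarrow> nat \<Rightarrow> xmono" where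
  "coeff_mono n j As b =
     sum_mset (image_mset (\<lambda>u. Poly_Mapping.single (u, n) 1) As) + Poly_Mapping.single (b, j) 1"

definition cnj :: "nat \<Rightarrow> nat \<Rightarrow> nat \<Rightarrow> (nat \<Rightarrow> nat \<Rightarrow> real) \<Rightarrow> (nat \<Rightarrow> nat \<Rightarrow> real)
    \<Rightarrow> (nat \<Rightarrow> real) \<Rightarrow> nat \<Rightarrow> nat \<Rightarrow> nat multiset \<Rightarrow> nat \<Rightarrow> real" where
  "cnj a d t Qm Km v n j As b = Poly_Mapping.lookup (phi a d t Qm Km v j) (coeff_mono n j As b)"

definition ynj :: "nat \<Rightarrow> nat \<Rightarrow> nat \<Rightarrow> (nat \<Rightarrow> nat \<Rightarrow> real) \<Rightarrow> (nat \<Rightarrow> nat \<Rightarrow> real)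
    \<Rightarrow> (nat \<Rightarrow> real) \<Rightarrow> nat \<Rightarrow> nat \<Rightarrow> nat multiset \<Rightarrow> nat \<Rightarrow> real" where
  "ynj a d t Qm Km v n j As b =
     cnj a d t Qm Km v n j As b / real (card (permutations_of_multiset As))"

text \<open>Ambient coordinate named (n, j, A, b) stands for y_{n,j}(A,b).\<close>
type_synonym coord = "nat \<times> nat \<times> nat multiset \<times> nat"

definition mu :: "nat \<Rightarrow> nat \<Rightarrow> nat \<Rightarrow> (nat \<Rightarrow> nat \<Rightarrow> real) \<Rightarrow> (nat \<Rightarrow> nat \<Rightarrow> real)
    \<Rightarrow> (nat \<Rightarrow> real) \<Rightarrow> coord \<Rightarrow> real" where
  "mu a d t Qm Km v = (\<lambda>(n, j, As, b). ynj a d t Qm Km v n j As b)"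

type_synonym ypoly = "(coord \<Rightarrow>\<^sub>0 nat) \<Rightarrow>\<^sub>0 real"

definition peval :: "ypoly \<Rightarrow> (coord \<Rightarrow> real) \<Rightarrow> real" where
  "peval P y = (\<Sum>m\<in>Poly_Mapping.keys P. Poly_Mapping.lookup P m * (\<Prod>c\<in>Poly_Mapping.keys m. y c ^ Poly_Mapping.lookup m c))"

definition mdeg :: "(coord \<Rightarrow>\<^sub>0 nat) \<Rightarrow> nat" where
  "mdeg m = (\<Sum>c\<in>Poly_Mapping.keys m. Poly_Mapping.lookup m c)"

definition homogeneous_of_degree :: "ypoly \<Rightarrow> nat \<Rightarrow> bool" where
  "homogeneous_of_degree P k \<longleftrightarrow> (\<forall>m\<in>Poly_Mapping.keys P. mdeg m = k)"

definition attention_variety :: "nat \<Rightarrow> nat \<Rightarrow> nat \<Rightarrow> (coord \<Rightarrow> real) set" where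
  "attention_variety a d t =
     {y. \<forall>P. (\<forall>Qm Km v. peval P (mu a d t Qm Km v) = 0) \<longrightarrow> peval P y = 0}"

definition omega :: "nat \<Rightarrow> nat \<Rightarrow> real" where
  "omega u w = (if u = w then 1 else 2)"

definition multi_idx :: "nat \<Rightarrow> nat \<Rightarrow> (nat \<Rightarrow> nat) set" where
  "multi_idx r k = {\<alpha>. (\<forall>m\<ge>r. \<alpha> m = 0) \<and> (\<Sum>m<r. \<alpha> m) = k}"

definition good_map :: "nat \<Rightarrow> (nat \<Rightarrow> nat) \<Rightarrow> (nat \<Rightarrow> nat) \<Rightarrow> bool" where
  "good_map r \<alpha> f \<longleftrightarrow>
     (\<forall>p<r. f p < r) \<and>
     (\<forall>m<r. card {p. p < r \<and> f p = m} = \<alpha> m) \<and>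
     (\<forall>p<r. \<forall>i\<ge>1. (f ^^ i) p = p \<longrightarrow> f p = p)"

definition M_mat :: "nat \<Rightarrow> nat \<Rightarrow> nat \<Rightarrow> (nat \<Rightarrow> nat) \<Rightarrow> (nat \<Rightarrow> nat) \<Rightarrow> (nat \<Rightarrow> nat)
    \<Rightarrow> (coord \<Rightarrow> real) \<Rightarrow> real mat" where
  "M_mat r n j ks ls f y =
     mat r r (\<lambda>(p, q). omega (ks (f p)) (ks p) * y (n, j, {#ks (f p), ks p#}, ls q))"

definition D_fun :: "nat \<Rightarrow> nat \<Rightarrow> nat \<Rightarrow> (nat \<Rightarrow> nat) \<Rightarrow> (nat \<Rightarrow> nat) \<Rightarrow> (nat \<Rightarrow> nat)
    \<Rightarrow> (coord \<Rightarrow> real) \<Rightarrow> real" where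
  "D_fun r n j ks ls f y = det (M_mat r n j ks ls f y)"

definition A_sub :: "nat \<Rightarrow> (nat \<Rightarrow> nat \<Rightarrow> real) \<Rightarrow> (nat \<Rightarrow> nat \<Rightarrow> real) \<Rightarrow> nat
    \<Rightarrow> (nat \<Rightarrow> nat) \<Rightarrow> (nat \<Rightarrow> nat) \<Rightarrow> real mat" where
  "A_sub a Qm Km r ks ls = mat r r (\<lambda>(p, q). attnA a Qm Km (ks p) (ls q))"

end

theory Submission
  imports Defs
begin

abbreviation X :: "nat \<Rightarrow> nat \<Rightarrow> xmono" where "X k n \<equiv> Poly_Mapping.single (k, n) 1"

lemma phi_expand:
  "phi a d t Qm Km v j = (\<Sum>n<t. \<Sum>u<d. \<Sum>w<d. \<Sum>k<d.
      Poly_Mapping.single (X k n + (X u n + X w j)) (v k * attnA a Qm Km u w))"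
  unfolding phi_def xvar_def xconst_def
  by (simp add: mult_single sum_distrib_left sum_distrib_right mult.assoc)

lemma lookup_phi:
  "Poly_Mapping.lookup (phi a d t Qm Km v j) M = (\<Sum>n<t. \<Sum>u<d. \<Sum>w<d. \<Sum>k<d.
      (if X k n + (X u n + X w j) = M then v k * attnA a Qm Km u w else 0))"
  unfolding phi_expand by (simp add: lookup_sum lookup_single when_def)

lemma mono_eq:
  assumes "n \<noteq> j"
  shows "(X k n' + (X u n' + X w j) = X p n + (X q n + X b j)) \<longleftrightarrow>
     (n' = n \<and> w = b \<and> ((k = p \<and> u = q) \<or> (k = q \<and> u = p)))" (is "?L \<longleftrightarrow> ?R")
proof
  assume L: ?L
  have E: "\<And>z. Poly_Mapping.lookup (X k n' + (X u n' + X w j)) z = Poly_Mapping.lookup (X p n + (X q n + X b j)) z"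
    using L by simp
  have e: "\<And>z. (if (k,n') = z then Suc 0 else 0) + (if (u,n') = z then Suc 0 else 0) + (if (w,j) = z then Suc 0 else 0)
      = (if (p,n) = z then Suc 0 else 0) + (if (q,n) = z then Suc 0 else (0::nat)) + (if (b,j) = z then Suc 0 else 0)"
  proof -
    fix z show "?thesis z" using E[of z] by (simp add: lookup_add lookup_single when_def add.assoc split del: if_split)
  qed
  have 1: "n' = n" using e[of "(p,n)"] assms by (auto split: if_splits)
  have 2: "w = b" using e[of "(b,j)"] assms 1 by (auto split: if_splits)
  show ?R using e[of "(p,n)"] e[of "(q,n)"] e[of "(k,n)"] 1 2 assms by (auto split: if_splits)
qed (auto simp: add_ac)

lemma coeff_mono2: "coeff_mono n j {#p,q#} b = X p n + (X q n + X b j)"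
  by (simp add: coeff_mono_def add_ac)

lemma sum4: "finite A \<Longrightarrow> finite B \<Longrightarrow> finite C \<Longrightarrow> finite E \<Longrightarrow>
  (\<Sum>a\<in>A. \<Sum>b\<in>B. \<Sum>c\<in>C. \<Sum>e\<in>E. g a b c e) = (\<Sum>(a,b,c,e)\<in>A\<times>B\<times>C\<times>E. g a b c e)"
  by (simp add: sum.cartesian_product split_def)

lemma cnj2:
  assumes "n < t" "n \<noteq> j" "p < d" "q < d" "b < d"
  shows "cnj a d t Qm Km v n j {#p,q#} b =
    (if p = q then v p * attnA a Qm Km p b else v p * attnA a Qm Km q b + v q * attnA a Qm Km p b)"
proof -
  let ?A = "attnA a Qm Km"
  have "cnj a d t Qm Km v n j {#p,q#} b = (\<Sum>x\<in>{..<t}\<times>{..<d}\<times>{..<d}\<times>{..<d}.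
      (if x \<in> {(n,q,b,p),(n,p,b,q)} then (case x of (n',u,w,k) \<Rightarrow> v k * ?A u w) else 0))"
    unfolding cnj_def lookup_phi coeff_mono2 mono_eq[OF assms(2)]
    by (subst sum4) (auto intro!: sum.cong)
  also have "\<dots> = (\<Sum>x\<in>{..<t}\<times>{..<d}\<times>{..<d}\<times>{..<d} \<inter> {(n,q,b,p),(n,p,b,q)}. (case x of (n',u,w,k) \<Rightarrow> v k * ?A u w))"
    by (subst sum.inter_restrict[symmetric]) (auto intro!: sum.cong simp: assms)
  also have "{..<t}\<times>{..<d}\<times>{..<d}\<times>{..<d} \<inter> {(n,q,b,p),(n,p,b,q)} = {(n,q,b,p),(n,p,b,q)}"
    using assms by auto
  finally show ?thesis by auto
qed

lemma omega_mu:
  assumes "n < t" "n \<noteq> j" "p < d" "q < d" "b < d"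
  shows "omega p q * mu a d t Qm Km v (n,j,{#p,q#},b) =
    (if p = q then v p * attnA a Qm Km p b else v p * attnA a Qm Km q b + v q * attnA a Qm Km p b)"
  using cnj2[OF assms, of a Qm Km v]
  by (simp add: mu_def ynj_def omega_def permutations_of_multiset_doubleton)

lemma perm_cycle:
  fixes r :: nat and \<sigma> f :: "nat \<Rightarrow> nat"
  assumes sp: "\<sigma> permutes {0..<r}" and i: "i < r" "\<sigma> i \<noteq> i"
    and sf: "\<forall>x<r. \<sigma> x \<noteq> x \<longrightarrow> \<sigma> x = f x"
    and cyc: "\<forall>p<r. \<forall>i\<ge>1. (f ^^ i) p = p \<longrightarrow> f p = p"
  shows False
proof -
  define x where "x k = (\<sigma> ^^ k) i" for k
  have inj: "inj \<sigma>" using permutes_inj[OF sp] .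
  have xr: "x k < r" for k
  proof (induction k)
    case 0 show ?case using i by (simp add: x_def)
  next
    case (Suc k)
    have "\<sigma> (x k) \<in> {0..<r}" using permutes_in_image[OF sp, of "x k"] Suc by simp
    then show ?case by (simp add: x_def)
  qed
  have nf: "\<sigma> (x k) \<noteq> x k" for k
  proof (induction k)
    case 0 then show ?case using i by (simp add: x_def)
  next
    case (Suc k)
    then show ?case using inj by (auto simp: x_def dest: injD)
  qed
  have xf: "x k = (f ^^ k) i" for k
  proof (induction k)
    case 0 then show ?case by (simp add: x_def)
  next
    case (Suc k)
    have "x (Suc k) = \<sigma> (x k)" by (simp add: x_def)
    also have "\<dots> = f (x k)" using sf xr nf by blast
    finally show ?case using Suc by simp
  qed
  have "\<not> inj_on x {0..r}"
  proof
    assume "inj_on x {0..r}"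
    then have "card {0..r} \<le> card {0..<r}"
      by (rule card_inj_on_le) (auto simp: xr)
    then show False by simp
  qed
  then obtain k1 k2 where k: "k1 < k2" "x k1 = x k2"
    unfolding inj_on_def by (metis linorder_neqE_nat)
  have "(\<sigma> ^^ k1) ((\<sigma> ^^ (k2 - k1)) i) = (\<sigma> ^^ k1) i"
  proof -
    have "\<sigma> ^^ k2 = \<sigma> ^^ k1 \<circ> \<sigma> ^^ (k2 - k1)"
      using k by (metis funpow_add le_add_diff_inverse less_imp_le)
    then show ?thesis using k by (simp add: x_def fun_eq_iff)
  qed
  then have "(\<sigma> ^^ (k2 - k1)) i = i"
    using inj_fn[OF inj, of k1] by (auto dest: injD)
  then have "(f ^^ (k2 - k1)) i = i" using xf by (simp add: x_def)
  then have "f i = i" using cyc i(1) k(1)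
    by (metis Suc_leI zero_less_diff One_nat_def)
  moreover have "\<sigma> i = f i" using sf i by auto
  ultimately show False using i by simp
qed

lemma detB:
  assumes g: "good_map r \<alpha> f"
  shows "det (mat r r (\<lambda>(p,q). (if q = p then c (f p) else 0) + (if q = f p \<and> f p \<noteq> p then e p else 0)))
     = (\<Prod>i<r. c (f i) :: real)"
proof -
  let ?B = "mat r r (\<lambda>(p,q). (if q = p then c (f p) else 0) + (if q = f p \<and> f p \<noteq> p then e p else (0::real)))"
  let ?g = "\<lambda>\<sigma>. signof \<sigma> * (\<Prod>i = 0..<r. ?B $$ (i, \<sigma> i))"
  have "det ?B = (\<Sum>\<sigma>\<in>{\<sigma>. \<sigma> permutes {0..<r}}. ?g \<sigma>)"
    by (rule det_def') simp
  also have "\<dots> = (\<Sum>\<sigma>\<in>{id}. ?g \<sigma>)"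
  proof (rule sum.mono_neutral_right)
    show "finite {\<sigma>. \<sigma> permutes {0..<r}}" by (rule finite_permutations) simp
    show "{id} \<subseteq> {\<sigma>. \<sigma> permutes {0..<r}}" by simp
    show "\<forall>\<sigma>\<in>{\<sigma>. \<sigma> permutes {0..<r}} - {id}. ?g \<sigma> = 0"
    proof
      fix \<sigma> assume s: "\<sigma> \<in> {\<sigma>. \<sigma> permutes {0..<r}} - {id}"
      then have sp: "\<sigma> permutes {0..<r}" by simp
      obtain i where i: "i < r" "\<sigma> i \<noteq> i"
        using s permutes_not_in[OF sp] by (auto simp: fun_eq_iff)
      have "(\<Prod>i = 0..<r. ?B $$ (i, \<sigma> i)) = 0"
      proof (rule ccontr)
        assume "(\<Prod>i = 0..<r. ?B $$ (i, \<sigma> i)) \<noteq> 0"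
        then have nz: "\<forall>x<r. ?B $$ (x, \<sigma> x) \<noteq> 0" by auto
        have "\<forall>x<r. \<sigma> x \<noteq> x \<longrightarrow> \<sigma> x = f x"
        proof (intro allI impI)
          fix x assume "x < r" "\<sigma> x \<noteq> x"
          moreover have "\<sigma> x < r" using permutes_in_image[OF sp] \<open>x < r\<close> by simp
          ultimately show "\<sigma> x = f x" using nz by (auto split: if_splits)
        qed
        then show False using perm_cycle[OF sp i] g unfolding good_map_def by blast
      qed
      then show "?g \<sigma> = 0" by simp
    qed
  qed
  also have "\<dots> = (\<Prod>i<r. c (f i))"
    by (auto simp: atLeast0LessThan intro!: prod.cong)
  finally show ?thesis .
qed

lemma prod_fiber:
  assumes "\<forall>p<r. f p < (r::nat)"
  shows "(\<Prod>i<r. g (f i)) = (\<Prod>m<r. g m ^ card {p. p < r \<and> f p = m})"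
proof -
  have "(\<Prod>i<r. g (f i)) = (\<Prod>m<r. \<Prod>i\<in>{x. x \<in> {..<r} \<and> f x = m}. g (f i))"
    by (rule prod.group[symmetric]) (use assms in auto)
  also have "\<dots> = (\<Prod>m<r. g m ^ card {p. p < r \<and> f p = m})"
    by (rule prod.cong) auto
  finally show ?thesis .
qed

lemma sum_B:
  assumes "p < r" "f p < (r::nat)"
  shows "(\<Sum>q = 0..<r. ((if q = p then c else 0) + (if q = f p \<and> f p \<noteq> p then e else 0)) * g q)
     = c * g p + (if f p \<noteq> p then e * g (f p) else (0::real))"
proof -
  have "(\<Sum>q = 0..<r. ((if q = p then c else 0) + (if q = f p \<and> f p \<noteq> p then e else 0)) * g q)
     = (\<Sum>q = 0..<r. (if q = p then c * g q else 0)) + (\<Sum>q = 0..<r. (if q = f p then (if f p \<noteq> p then e * g q else 0) else 0))"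
    by (subst sum.distrib[symmetric]) (rule sum.cong, auto)
  also have "\<dots> = c * g p + (if f p \<noteq> p then e * g (f p) else 0)"
    using assms by (simp add: sum.delta)
  finally show ?thesis .
qed

lemma part2:
  assumes nt: "n < t" "n \<noteq> j" and ks: "inj_on ks {..<r}" "\<forall>m<r. ks m < d" and ls: "\<forall>m<r. ls m < d"
    and g: "good_map r \<alpha> f"
  shows "D_fun r n j ks ls f (mu a d t Qm Km v) = (\<Prod>m<r. v (ks m) ^ \<alpha> m) * det (A_sub a Qm Km r ks ls)"
proof -
  have fr: "\<forall>p<r. f p < r" and cnt: "\<forall>m<r. card {p. p < r \<and> f p = m} = \<alpha> m"
    using g unfolding good_map_def by auto
  let ?A = "attnA a Qm Km"
  define B where "B = mat r r (\<lambda>(p,q). (if q = p then v (ks (f p)) else 0) + (if q = f p \<and> f p \<noteq> p then v (ks p) else 0))"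
  have M: "M_mat r n j ks ls f (mu a d t Qm Km v) = B * A_sub a Qm Km r ks ls"
  proof (rule eq_matI)
    fix p l assume p: "p < dim_row (B * A_sub a Qm Km r ks ls)" and l: "l < dim_col (B * A_sub a Qm Km r ks ls)"
    then have pr: "p < r" and lr: "l < r" by (auto simp: B_def A_sub_def)
    have fpr: "f p < r" using fr pr by auto
    have "(B * A_sub a Qm Km r ks ls) $$ (p, l) = (\<Sum>q = 0..<r. ((if q = p then v (ks (f p)) else 0) + (if q = f p \<and> f p \<noteq> p then v (ks p) else 0)) * ?A (ks q) (ls l))"
      using pr lr by (simp add: B_def A_sub_def scalar_prod_def)
    also have "\<dots> = v (ks (f p)) * ?A (ks p) (ls l) + (if f p \<noteq> p then v (ks p) * ?A (ks (f p)) (ls l) else 0)"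
      by (rule sum_B[of p r f, OF pr fpr])
    also have "\<dots> = omega (ks (f p)) (ks p) * mu a d t Qm Km v (n, j, {#ks (f p), ks p#}, ls l)"
    proof -
      have e: "ks (f p) = ks p \<longleftrightarrow> f p = p" using ks(1) pr fpr by (auto dest: inj_onD)
      show ?thesis
        by (subst omega_mu[OF nt]) (use ks ls pr fpr lr e in auto)
    qed
    finally show "M_mat r n j ks ls f (mu a d t Qm Km v) $$ (p, l) = (B * A_sub a Qm Km r ks ls) $$ (p, l)"
      using pr lr by (simp add: M_mat_def)
  qed (auto simp: M_mat_def B_def A_sub_def)
  have "D_fun r n j ks ls f (mu a d t Qm Km v) = det B * det (A_sub a Qm Km r ks ls)"
    unfolding D_fun_def M by (rule det_mult[of _ r]) (auto simp: B_def A_sub_def)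
  also have "det B = (\<Prod>i<r. v (ks (f i)))"
    unfolding B_def by (rule detB[OF g])
  also have "\<dots> = (\<Prod>m<r. v (ks m) ^ \<alpha> m)"
    using prod_fiber[OF fr, of "\<lambda>m. v (ks m)"] cnt by simp
  finally show ?thesis .
qed

lemma assign:
  assumes "finite Z" "finite S"
  shows "(\<Sum>m\<in>S. \<beta> m) = card Z \<Longrightarrow> \<exists>g. (\<forall>z\<in>Z. g z \<in> S) \<and> (\<forall>m\<in>S. card {z\<in>Z. g z = m} = \<beta> m)"
  using assms(1)
proof (induction Z arbitrary: \<beta> rule: finite_induct)
  case empty
  then have "\<forall>m\<in>S. \<beta> m = 0" using assms(2) by simp
  then show ?case by simp
next
  case (insert z Z)
  then have pos: "(\<Sum>m\<in>S. \<beta> m) > 0" by simp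
  have "\<exists>m\<in>S. \<beta> m > 0"
  proof (rule ccontr)
    assume "\<not> ?thesis"
    then have "\<forall>m\<in>S. \<beta> m = 0" by auto
    then have "(\<Sum>m\<in>S. \<beta> m) = 0" by simp
    with pos show False by simp
  qed
  then obtain m0 where m0: "m0 \<in> S" "\<beta> m0 > 0" by blast
  define \<beta>' where "\<beta>' = \<beta>(m0 := \<beta> m0 - 1)"
  have "(\<Sum>m\<in>S. \<beta> m) = \<beta> m0 + (\<Sum>m\<in>S - {m0}. \<beta> m)"
    using m0 assms(2) by (simp add: sum.remove)
  moreover have "(\<Sum>m\<in>S. \<beta>' m) = \<beta>' m0 + (\<Sum>m\<in>S - {m0}. \<beta>' m)"
    using m0 assms(2) by (simp add: sum.remove)
  moreover have "(\<Sum>m\<in>S - {m0}. \<beta>' m) = (\<Sum>m\<in>S - {m0}. \<beta> m)"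
    by (rule sum.cong) (auto simp: \<beta>'_def)
  ultimately have "(\<Sum>m\<in>S. \<beta>' m) = card Z"
    using insert m0 by (simp add: \<beta>'_def)
  then obtain g' where g': "\<forall>z\<in>Z. g' z \<in> S" "\<forall>m\<in>S. card {z\<in>Z. g' z = m} = \<beta>' m"
    using insert.IH by blast
  define g where "g = g'(z := m0)"
  have "\<forall>z\<in>insert z Z. g z \<in> S" using g' m0 by (auto simp: g_def)
  moreover have "card {x\<in>insert z Z. g x = m} = \<beta> m" if m: "m \<in> S" for m
  proof (cases "m = m0")
    case True
    have "{x\<in>insert z Z. g x = m} = insert z {x\<in>Z. g' x = m}"
      using True insert(2) by (auto simp: g_def)
    then show ?thesis using g'(2) m True insert(1,2) m0(2) by (simp add: \<beta>'_def)
  next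
    case False
    have "{x\<in>insert z Z. g x = m} = {x\<in>Z. g' x = m}"
      using False insert(2) by (auto simp: g_def)
    then show ?thesis using g'(2) m False by (simp add: \<beta>'_def)
  qed
  ultimately show ?case by blast
qed

lemma funpow_idem: "f (f p) = f p \<Longrightarrow> (f ^^ Suc i) p = f p"
  by (induction i) auto

lemma part1:
  assumes a: "\<alpha> \<in> multi_idx r r"
  shows "\<exists>f. good_map r \<alpha> f"
proof -
  define S where "S = {m. m < r \<and> \<alpha> m \<ge> 1}"
  define Z where "Z = {m. m < r \<and> \<alpha> m = 0}"
  have fin: "finite S" "finite Z" by (auto simp: S_def Z_def)
  have sumr: "(\<Sum>m<r. \<alpha> m) = r" using a by (simp add: multi_idx_def)
  have SZ: "{..<r} = S \<union> Z" "S \<inter> Z = {}" by (auto simp: S_def Z_def)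
  have "(\<Sum>m<r. \<alpha> m) = (\<Sum>m\<in>S. \<alpha> m) + (\<Sum>m\<in>Z. \<alpha> m)"
    unfolding SZ(1) by (rule sum.union_disjoint) (use fin SZ in auto)
  moreover have "(\<Sum>m\<in>Z. \<alpha> m) = 0" by (simp add: Z_def)
  ultimately have sS: "(\<Sum>m\<in>S. \<alpha> m) = r" using sumr by simp
  have cr: "card S + card Z = r"
    using card_Un_disjoint[OF fin SZ(2)] SZ(1) by (metis card_lessThan)
  have "(\<Sum>m\<in>S. \<alpha> m - 1) + card S = (\<Sum>m\<in>S. \<alpha> m)"
  proof -
    have "(\<Sum>m\<in>S. \<alpha> m) = (\<Sum>m\<in>S. (\<alpha> m - 1) + 1)" by (rule sum.cong) (auto simp: S_def)
    also have "\<dots> = (\<Sum>m\<in>S. \<alpha> m - 1) + (\<Sum>m\<in>S. 1)" by (rule sum.distrib)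
    finally show ?thesis by simp
  qed
  then have "(\<Sum>m\<in>S. \<alpha> m - 1) = card Z" using sS cr by simp
  then obtain g where g: "\<forall>z\<in>Z. g z \<in> S" "\<forall>m\<in>S. card {z\<in>Z. g z = m} = \<alpha> m - 1"
    using assign[OF fin(2) fin(1)] by blast
  define f where "f p = (if p \<in> Z then g p else p)" for p
  have fS: "p \<in> Z \<Longrightarrow> f p \<in> S" for p using g(1) by (simp add: f_def)
  have SnZ: "x \<in> S \<Longrightarrow> x \<notin> Z" for x by (auto simp: S_def Z_def)
  have "\<forall>p<r. f p < r"
    using g(1) by (auto simp: f_def S_def Z_def)
  moreover have "\<forall>m<r. card {p. p < r \<and> f p = m} = \<alpha> m"
  proof (intro allI impI)
    fix m assume m: "m < r"
    show "card {p. p < r \<and> f p = m} = \<alpha> m"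
    proof (cases "\<alpha> m = 0")
      case True
      then have "m \<in> Z" using m by (simp add: Z_def)
      have "{p. p < r \<and> f p = m} = {}"
      proof -
        { fix p assume pm: "f p = m"
          have False
          proof (cases "p \<in> Z")
            case True
            then have "f p \<in> S" by (rule fS)
            then show False using SnZ \<open>m \<in> Z\<close> pm by blast
          next
            case False
            then show False using pm \<open>m \<in> Z\<close> by (simp add: f_def)
          qed }
        then show ?thesis by blast
      qed
      then show ?thesis using True by simp
    next
      case False
      then have mS: "m \<in> S" using m by (simp add: S_def)
      have "{p. p < r \<and> f p = m} = insert m {z\<in>Z. g z = m}"
        using mS SnZ m by (auto simp: f_def Z_def S_def)
      then show ?thesis using g(2) mS SnZ fin(2) False by simp
    qed
  qed
  moreover have "\<forall>p<r. \<forall>i\<ge>1. (f ^^ i) p = p \<longrightarrow> f p = p"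
  proof (intro allI impI)
    fix p i assume "p < r" "1 \<le> (i::nat)" and fi: "(f ^^ i) p = p"
    show "f p = p"
    proof (cases "p \<in> Z")
      case True
      then have "f (f p) = f p" using fS SnZ by (auto simp: f_def)
      moreover obtain i' where "i = Suc i'" using \<open>1 \<le> i\<close> by (cases i) auto
      ultimately show ?thesis using fi funpow_idem[of f p i'] by simp
    next
      case False then show ?thesis by (simp add: f_def)
    qed
  qed
  ultimately show ?thesis unfolding good_map_def by blast
qed



definition meval :: "(coord \<Rightarrow>\<^sub>0 nat) \<Rightarrow> (coord \<Rightarrow> real) \<Rightarrow> real" where
  "meval m y = (\<Prod>c\<in>Poly_Mapping.keys m. y c ^ Poly_Mapping.lookup m c)"

lemma meval_superset:
  assumes "finite S" "Poly_Mapping.keys m \<subseteq> S"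
  shows "meval m y = (\<Prod>c\<in>S. y c ^ Poly_Mapping.lookup m c)"
  unfolding meval_def
  by (rule prod.mono_neutral_left) (use assms in \<open>auto simp: in_keys_iff\<close>)

lemma meval_add: "meval (m1 + m2) y = meval m1 y * meval m2 y"
proof -
  let ?S = "Poly_Mapping.keys m1 \<union> Poly_Mapping.keys m2"
  have f: "finite ?S" by simp
  have "meval (m1 + m2) y = (\<Prod>c\<in>?S. y c ^ Poly_Mapping.lookup (m1 + m2) c)"
    by (rule meval_superset[OF f keys_add])
  also have "\<dots> = (\<Prod>c\<in>?S. y c ^ Poly_Mapping.lookup m1 c) * (\<Prod>c\<in>?S. y c ^ Poly_Mapping.lookup m2 c)"
    by (simp add: lookup_add power_add prod.distrib)
  also have "\<dots> = meval m1 y * meval m2 y"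
    by (simp add: meval_superset[OF f])
  finally show ?thesis .
qed

lemma meval_single: "meval (Poly_Mapping.single c (Suc 0)) y = y c"
  by (simp add: meval_def)

lemma meval_zero: "meval 0 y = 1"
  by (simp add: meval_def)

lemma meval_sum: "finite I \<Longrightarrow> meval (\<Sum>i\<in>I. h i) y = (\<Prod>i\<in>I. meval (h i) y)"
  by (induction I rule: finite_induct) (auto simp: meval_zero meval_add)

lemma mdeg_superset:
  assumes "finite S" "Poly_Mapping.keys m \<subseteq> S"
  shows "mdeg m = (\<Sum>c\<in>S. Poly_Mapping.lookup m c)"
  unfolding mdeg_def
  by (rule sum.mono_neutral_left) (use assms in \<open>auto simp: in_keys_iff\<close>)

lemma mdeg_add: "mdeg (m1 + m2) = mdeg m1 + mdeg m2"
proof -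
  let ?S = "Poly_Mapping.keys m1 \<union> Poly_Mapping.keys m2"
  have f: "finite ?S" by simp
  have "mdeg (m1 + m2) = (\<Sum>c\<in>?S. Poly_Mapping.lookup (m1 + m2) c)"
    by (rule mdeg_superset[OF f keys_add])
  also have "\<dots> = (\<Sum>c\<in>?S. Poly_Mapping.lookup m1 c) + (\<Sum>c\<in>?S. Poly_Mapping.lookup m2 c)"
    by (simp add: lookup_add sum.distrib)
  also have "\<dots> = mdeg m1 + mdeg m2"
    by (simp add: mdeg_superset[OF f])
  finally show ?thesis .
qed

lemma mdeg_single [simp]: "mdeg (Poly_Mapping.single c (Suc 0)) = 1"
  by (simp add: mdeg_def)

lemma mdeg_zero: "mdeg 0 = 0"
  by (simp add: mdeg_def)

lemma mdeg_sum: "finite I \<Longrightarrow> mdeg (\<Sum>i\<in>I. h i) = (\<Sum>i\<in>I. mdeg (h i))"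
  by (induction I rule: finite_induct) (simp_all add: mdeg_add mdeg_zero)

lemma peval_superset:
  assumes "finite S" "Poly_Mapping.keys P \<subseteq> S"
  shows "peval P y = (\<Sum>m\<in>S. Poly_Mapping.lookup P m * meval m y)"
  unfolding peval_def meval_def[symmetric]
  by (rule sum.mono_neutral_left) (use assms in \<open>auto simp: in_keys_iff\<close>)

lemma keys_diff: "Poly_Mapping.keys (P - Q) \<subseteq> Poly_Mapping.keys P \<union> Poly_Mapping.keys (Q :: ypoly)"
  by (auto simp: in_keys_iff lookup_minus)

lemma peval_add: "peval (P + Q) y = peval P y + peval Q y"
proof -
  let ?S = "Poly_Mapping.keys P \<union> Poly_Mapping.keys Q"
  have f: "finite ?S" by simp
  show ?thesis
    by (simp add: peval_superset[OF f keys_add] peval_superset[OF f] lookup_add distrib_right sum.distrib)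
qed

lemma peval_diff: "peval (P - Q) y = peval P y - peval Q y"
proof -
  let ?S = "Poly_Mapping.keys P \<union> Poly_Mapping.keys Q"
  have f: "finite ?S" by simp
  show ?thesis
    by (simp add: peval_superset[OF f keys_diff] peval_superset[OF f] lookup_minus left_diff_distrib sum_subtractf)
qed

lemma peval_single: "peval (Poly_Mapping.single m c) y = c * meval m y"
  by (simp add: peval_def meval_def)

lemma peval_zero: "peval 0 y = 0"
  by (simp add: peval_def)

lemma peval_sum: "finite I \<Longrightarrow> peval (\<Sum>i\<in>I. h i) y = (\<Sum>i\<in>I. peval (h i) y)"
  by (induction I rule: finite_induct) (auto simp: peval_zero peval_add)

lemma hom_add: "homogeneous_of_degree P k \<Longrightarrow> homogeneous_of_degree Q k \<Longrightarrow> homogeneous_of_degree (P + Q) k"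
  using keys_add[of P Q] unfolding homogeneous_of_degree_def by auto

lemma hom_diff: "homogeneous_of_degree P k \<Longrightarrow> homogeneous_of_degree Q k \<Longrightarrow> homogeneous_of_degree (P - Q) k"
  using keys_diff[of P Q] unfolding homogeneous_of_degree_def by auto

lemma hom_single: "mdeg m = k \<Longrightarrow> homogeneous_of_degree (Poly_Mapping.single m c) k"
  unfolding homogeneous_of_degree_def by simp

lemma hom_sum: "finite I \<Longrightarrow> (\<And>i. i \<in> I \<Longrightarrow> homogeneous_of_degree (h i) k) \<Longrightarrow> homogeneous_of_degree (\<Sum>i\<in>I. h i) k"
proof (induction I rule: finite_induct)
  case empty then show ?case by (simp add: homogeneous_of_degree_def)
next
  case (insert x F)
  have "sum h (insert x F) = h x + sum h F" using insert(1,2) by simp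
  then show ?case using insert by (simp only:) (rule hom_add, auto)
qed

definition monoD :: "nat \<Rightarrow> nat \<Rightarrow> nat \<Rightarrow> (nat \<Rightarrow> nat) \<Rightarrow> (nat \<Rightarrow> nat) \<Rightarrow> (nat \<Rightarrow> nat) \<Rightarrow> (nat \<Rightarrow> nat) \<Rightarrow> coord \<Rightarrow>\<^sub>0 nat" where
  "monoD r n j ks ls F \<sigma> = (\<Sum>i<r. Poly_Mapping.single (n, j, {#ks (F i), ks i#}, ls (\<sigma> i)) 1)"

definition coefD :: "nat \<Rightarrow> (nat \<Rightarrow> nat) \<Rightarrow> (nat \<Rightarrow> nat) \<Rightarrow> (nat \<Rightarrow> nat) \<Rightarrow> real" where
  "coefD r ks F \<sigma> = signof \<sigma> * (\<Prod>i<r. omega (ks (F i)) (ks i))"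

lemma mdeg_monoD: "mdeg (monoD r n j ks ls F \<sigma>) = r"
  by (simp add: monoD_def mdeg_sum mdeg_single)

lemma D_expand:
  "D_fun r n j ks ls F y = (\<Sum>\<sigma>\<in>{\<sigma>. \<sigma> permutes {0..<r}}. coefD r ks F \<sigma> * meval (monoD r n j ks ls F \<sigma>) y)"
proof -
  have "D_fun r n j ks ls F y = (\<Sum>\<sigma>\<in>{\<sigma>. \<sigma> permutes {0..<r}}. signof \<sigma> * (\<Prod>i = 0..<r. M_mat r n j ks ls F y $$ (i, \<sigma> i)))"
    unfolding D_fun_def by (rule det_def') (simp add: M_mat_def)
  also have "\<dots> = (\<Sum>\<sigma>\<in>{\<sigma>. \<sigma> permutes {0..<r}}. coefD r ks F \<sigma> * meval (monoD r n j ks ls F \<sigma>) y)"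
  proof (rule sum.cong)
    fix \<sigma> assume "\<sigma> \<in> {\<sigma>. \<sigma> permutes {0..<r}}"
    then have sp: "\<sigma> permutes {0..<r}" by simp
    have "(\<Prod>i = 0..<r. M_mat r n j ks ls F y $$ (i, \<sigma> i)) = (\<Prod>i<r. omega (ks (F i)) (ks i) * y (n, j, {#ks (F i), ks i#}, ls (\<sigma> i)))"
      unfolding atLeast0LessThan
    proof (rule prod.cong)
      fix i assume "i \<in> {..<r}"
      moreover then have "\<sigma> i < r" using permutes_in_image[OF sp, of i] by simp
      ultimately show "M_mat r n j ks ls F y $$ (i, \<sigma> i) = omega (ks (F i)) (ks i) * y (n, j, {#ks (F i), ks i#}, ls (\<sigma> i))"
        by (simp add: M_mat_def)
    qed simp
    then show "signof \<sigma> * (\<Prod>i = 0..<r. M_mat r n j ks ls F y $$ (i, \<sigma> i)) = coefD r ks F \<sigma> * meval (monoD r n j ks ls F \<sigma>) y"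
      by (simp add: coefD_def monoD_def meval_sum meval_single prod.distrib)
  qed simp
  finally show ?thesis .
qed

definition PP :: "nat \<Rightarrow> nat \<Rightarrow> nat \<Rightarrow> (nat \<Rightarrow> nat) \<Rightarrow> (nat \<Rightarrow> nat) \<Rightarrow> (nat \<Rightarrow> nat) \<Rightarrow> (nat \<Rightarrow> nat) \<Rightarrow> ypoly" where
  "PP r n j ks ls F G = (\<Sum>\<sigma>\<in>{\<sigma>. \<sigma> permutes {0..<r}}. \<Sum>\<tau>\<in>{\<sigma>. \<sigma> permutes {0..<r}}.
      Poly_Mapping.single (monoD r n j ks ls F \<sigma> + monoD r n j ks ls G \<tau>) (coefD r ks F \<sigma> * coefD r ks G \<tau>))"

lemma peval_PP: "peval (PP r n j ks ls F G) y = D_fun r n j ks ls F y * D_fun r n j ks ls G y"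
proof -
  have fin: "finite {\<sigma>. \<sigma> permutes {0..<r::nat}}" by (rule finite_permutations) simp
  let ?P = "{\<sigma>. \<sigma> permutes {0..<r}}"
  have "peval (PP r n j ks ls F G) y = (\<Sum>\<sigma>\<in>?P. \<Sum>\<tau>\<in>?P. (coefD r ks F \<sigma> * meval (monoD r n j ks ls F \<sigma>) y) * (coefD r ks G \<tau> * meval (monoD r n j ks ls G \<tau>) y))"
    unfolding PP_def peval_sum[OF fin] peval_single meval_add by (simp add: mult_ac)
  also have "\<dots> = (\<Sum>\<sigma>\<in>?P. coefD r ks F \<sigma> * meval (monoD r n j ks ls F \<sigma>) y) * (\<Sum>\<tau>\<in>?P. coefD r ks G \<tau> * meval (monoD r n j ks ls G \<tau>) y)"
    by (rule sum_product[symmetric])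
  finally show ?thesis unfolding D_expand .
qed

lemma hom_PP: "homogeneous_of_degree (PP r n j ks ls F G) (2 * r)"
proof -
  have fin: "finite {\<sigma>. \<sigma> permutes {0..<r::nat}}" by (rule finite_permutations) simp
  show ?thesis
    unfolding PP_def
    by (intro hom_sum[OF fin] hom_single) (simp add: mdeg_add mdeg_monoD)
qed


lemma idx_add:
  assumes "\<beta> \<in> multi_idx r k" "\<gamma> \<in> multi_idx r (r - k)" "k < r"
  shows "(\<lambda>m. \<beta> m + \<gamma> m) \<in> multi_idx r r"
  using assms by (simp add: multi_idx_def sum.distrib)

lemma prodpow: "(\<Prod>m<r. x m ^ a m) * (\<Prod>m<r. x m ^ b m) = (\<Prod>m<r. (x m :: real) ^ (a m + b m))"
  by (simp add: power_add prod.distrib)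

theorem mainTheorem12:
  fixes a d t n j r :: nat and ks ls :: "nat \<Rightarrow> nat"
  assumes "t > 1" and "j < t" and "n < t" and "n \<noteq> j"
    and "2 \<le> r" and "r \<le> min a d"
    and "inj_on ks {..<r}" and "\<forall>m<r. ks m < d"
    and "inj_on ls {..<r}" and "\<forall>m<r. ls m < d"
  shows
    "(\<forall>\<alpha>\<in>multi_idx r r. \<exists>f. good_map r \<alpha> f)
     \<and> (\<forall>\<alpha>\<in>multi_idx r r. \<forall>f. good_map r \<alpha> f \<longrightarrow>
          (\<forall>Qm Km v. D_fun r n j ks ls f (mu a d t Qm Km v)
             = (\<Prod>m<r. v (ks m) ^ \<alpha> m) * det (A_sub a Qm Km r ks ls)))
     \<and> (\<forall>F. (\<forall>\<alpha>\<in>multi_idx r r. good_map r \<alpha> (F \<alpha>)) \<longrightarrow>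
          (\<forall>k. 1 \<le> k \<and> k < r \<longrightarrow>
            (\<forall>\<beta>1\<in>multi_idx r k. \<forall>\<beta>2\<in>multi_idx r k.
             \<forall>\<gamma>1\<in>multi_idx r (r - k). \<forall>\<gamma>2\<in>multi_idx r (r - k).
               \<exists>P. homogeneous_of_degree P (2 * r)
                 \<and> (\<forall>y. peval P y =
                       D_fun r n j ks ls (F (\<lambda>m. \<beta>1 m + \<gamma>1 m)) y * D_fun r n j ks ls (F (\<lambda>m. \<beta>2 m + \<gamma>2 m)) y
                     - D_fun r n j ks ls (F (\<lambda>m. \<beta>1 m + \<gamma>2 m)) y * D_fun r n j ks ls (F (\<lambda>m. \<beta>2 m + \<gamma>1 m)) y)
                 \<and> (\<forall>y\<in>attention_variety a d t. peval P y = 0))))"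
proof -
  have P2: "D_fun r n j ks ls f (mu a d t Qm Km v) = (\<Prod>m<r. v (ks m) ^ \<alpha> m) * det (A_sub a Qm Km r ks ls)"
    if "good_map r \<alpha> f" for \<alpha> f Qm Km v
    by (rule part2[OF assms(3,4,7,8,10) that])
  have C1: "\<forall>\<alpha>\<in>multi_idx r r. \<exists>f. good_map r \<alpha> f" using part1 by blast
  have C3: "\<exists>P. homogeneous_of_degree P (2 * r)
                 \<and> (\<forall>y. peval P y =
                       D_fun r n j ks ls (F (\<lambda>m. \<beta>1 m + \<gamma>1 m)) y * D_fun r n j ks ls (F (\<lambda>m. \<beta>2 m + \<gamma>2 m)) y
                     - D_fun r n j ks ls (F (\<lambda>m. \<beta>1 m + \<gamma>2 m)) y * D_fun r n j ks ls (F (\<lambda>m. \<beta>2 m + \<gamma>1 m)) y)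
                 \<and> (\<forall>y\<in>attention_variety a d t. peval P y = 0)"
    if HF: "\<forall>\<alpha>\<in>multi_idx r r. good_map r \<alpha> (F \<alpha>)" and k: "1 \<le> k \<and> k < r"
      and b: "\<beta>1 \<in> multi_idx r k" "\<beta>2 \<in> multi_idx r k"
      and g: "\<gamma>1 \<in> multi_idx r (r - k)" "\<gamma>2 \<in> multi_idx r (r - k)"
    for F k \<beta>1 \<beta>2 \<gamma>1 \<gamma>2
  proof -
    let ?a11 = "\<lambda>m. \<beta>1 m + \<gamma>1 m" and ?a22 = "\<lambda>m. \<beta>2 m + \<gamma>2 m"
      and ?a12 = "\<lambda>m. \<beta>1 m + \<gamma>2 m" and ?a21 = "\<lambda>m. \<beta>2 m + \<gamma>1 m"
    define P where "P = PP r n j ks ls (F ?a11) (F ?a22) - PP r n j ks ls (F ?a12) (F ?a21)"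
    have hom: "homogeneous_of_degree P (2 * r)"
      unfolding P_def by (intro hom_diff hom_PP)
    have ev: "peval P y =
        D_fun r n j ks ls (F ?a11) y * D_fun r n j ks ls (F ?a22) y
      - D_fun r n j ks ls (F ?a12) y * D_fun r n j ks ls (F ?a21) y" for y
      unfolding P_def peval_diff peval_PP ..
    have gm: "good_map r ?a11 (F ?a11)" "good_map r ?a22 (F ?a22)" "good_map r ?a12 (F ?a12)" "good_map r ?a21 (F ?a21)"
      using HF idx_add[OF b(1) g(1)] idx_add[OF b(2) g(2)] idx_add[OF b(1) g(2)] idx_add[OF b(2) g(1)] k by auto
    have van: "peval P (mu a d t Qm Km v) = 0" for Qm Km v
    proof -
      let ?x = "\<lambda>m. v (ks m)" and ?D = "det (A_sub a Qm Km r ks ls)"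
      have "peval P (mu a d t Qm Km v) =
          ((\<Prod>m<r. ?x m ^ ?a11 m) * (\<Prod>m<r. ?x m ^ ?a22 m)) * (?D * ?D)
        - ((\<Prod>m<r. ?x m ^ ?a12 m) * (\<Prod>m<r. ?x m ^ ?a21 m)) * (?D * ?D)"
        unfolding ev P2[OF gm(1)] P2[OF gm(2)] P2[OF gm(3)] P2[OF gm(4)] by (simp add: mult_ac)
      also have "\<dots> = 0"
        unfolding prodpow by (simp add: add_ac)
      finally show ?thesis .
    qed
    have "\<forall>y\<in>attention_variety a d t. peval P y = 0"
      using van unfolding attention_variety_def by blast
    then show ?thesis using hom ev by blast
  qed
  show ?thesis using C1 P2 C3 by blast
qed

end
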